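(* Let $\mathcal L_t(\varphi)=\sum_{j=1}^r\lambda_j\int_{\Gamma_j}\varphi(x)e^{x^3/3+tx}\,dx$, where each $\Gamma_j$ is a path coming from infinity in one of the directions $\arg x\in\{\pi,\pi/3,-\pi/3\}$ and going to infinity in another of these directions, and the $\lambda_j\in\mathbb C$ do not depend on $t$. Assume that for $t$ in an open interval $I$ all Hankel determinants of the moments $\mathcal L_t(x^k)$ are nonzero, and let $a_n(t),b_n(t)$ be the recurrence coefficients of the corresponding orthonormal polynomials. Then for $n\ge1$ (with $a_0=0$ where it occurs) $$a_n^2+a_{n+1}^2+b_n^2+t=0,\qquad n+a_n^2(b_n+b_{n-1})=0,$$ and $$\frac{\dot a_n}{a_n}=b_n+\frac{n}{2a_n^2},\qquad \dot b_n=-b_n^2-2a_n^2-t.$$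
   Context: Orthonormal polynomials $p_n(z)=\gamma_nz^n+\cdots$ with $\mathcal L_t(p_np_m)=\delta_{n,m}$ satisfy $a_{n+1}p_{n+1}(z)=(z-b_n)p_n(z)-a_np_{n-1}(z)$, $p_{-1}=0$, $a_n=\gamma_{n-1}/\gamma_n$ (quantities possibly complex). Dots denote $d/dt$. *)

theory Defs
  imports "HOL-Analysis.Analysis" "HOL-Computational_Algebra.Polynomial"
begin

definition dirs :: "complex set" where
  "dirs = {cis pi, cis (pi/3), cis (-(pi/3))}"

definition ray_integral :: "complex poly \<Rightarrow> complex \<Rightarrow> real \<Rightarrow> complex" where
  "ray_integral \<phi> w t =
     integral {0..} (\<lambda>s::real. w * poly \<phi> (of_real s * w)
                       * exp ((of_real s * w) ^ 3 / 3 + of_real t * (of_real s * w)))"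

text \<open>Integral along a contour coming from infinity in direction u and going to infinity
  in direction v (realised as the canonical contour: in along the u-ray, out along the v-ray;
  by Cauchy's theorem every such contour gives the same value).\<close>
definition contour_functional :: "complex \<Rightarrow> complex \<Rightarrow> real \<Rightarrow> complex poly \<Rightarrow> complex" where
  "contour_functional u v t \<phi> = ray_integral \<phi> v t - ray_integral \<phi> u t"

definition L_fun :: "nat \<Rightarrow> (nat \<Rightarrow> complex) \<Rightarrow> (nat \<Rightarrow> complex) \<Rightarrow> (nat \<Rightarrow> complex)
                     \<Rightarrow> real \<Rightarrow> complex poly \<Rightarrow> complex" where
  "L_fun r lam src tgt t \<phi> = (\<Sum>j<r. lam j * contour_functional (src j) (tgt j) t \<phi>)"

definition hankel_det :: "(nat \<Rightarrow> complex) \<Rightarrow> nat \<Rightarrow> complex" where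
  "hankel_det m n = (\<Sum>p\<in>{p. p permutes {..<n}}. of_int (sign p) * (\<Prod>i<n. m (i + p i)))"

end

theory Submission
  imports Defs
begin


lemma pow_le_fact_exp: fixes s::real assumes "s \<ge> 0" shows "s ^ i \<le> fact i * exp s"
proof -
  have "(\<Sum>n\<in>{i}. inverse (fact n) * s ^ n) \<le> (\<Sum>n. inverse (fact n) * s ^ n)"
    using assms by (intro sum_le_suminf) (auto intro: summable_exp)
  also have "\<dots> = exp s" by (simp add: exp_def scaleR_conv_of_real field_simps)
  finally show ?thesis by (simp add: field_simps)
qed

lemma exp_cubic_bound: fixes A::real shows "\<exists>M. \<forall>s\<ge>0. exp (A* s - s^3/3) \<le> M * exp (-s)"
proof -
  define K where "K = \<bar>A\<bar> + 1"
  have K1: "K \<ge> 1" by (simp add: K_def)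
  have key: "A* s + s - s^3/3 \<le> 3*K^2" if s: "s \<ge> 0" for s
  proof -
    have "A * s \<le> \<bar>A\<bar> * s" using s by (intro mult_right_mono) auto
    hence As: "A * s + s \<le> K * s" by (simp add: K_def algebra_simps)
    show ?thesis
    proof (cases "s \<le> 3*K")
      case True
      have "K* s \<le> K*(3*K)" using True K1 by (intro mult_left_mono) auto
      hence "K * s \<le> 3*K^2" by (simp add: power2_eq_square)
      moreover have "s^3 \<ge> 0" using s by simp
      ultimately show ?thesis using As by linarith
    next
      case False
      have "s* s \<ge> (3*K)*(3*K)" using False K1 by (intro mult_mono) auto
      hence "s* s \<ge> 3*K" using K1 by (smt (verit) mult_le_cancel_right1 mult_nonneg_nonneg)
      hence "s*(s* s) \<ge> s*(3*K)" using s by (intro mult_left_mono) auto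
      hence "s^3/3 \<ge> K* s" by (simp add: power3_eq_cube algebra_simps)
      moreover have "3*K^2 \<ge> 0" by simp
      ultimately show ?thesis using As by linarith
    qed
  qed
  show ?thesis
  proof (intro exI allI impI)
    fix s::real assume "s \<ge> 0"
    have "exp (A* s - s^3/3) = exp (A* s + s - s^3/3) * exp (-s)" by (simp add: exp_add[symmetric])
    also have "\<dots> \<le> exp (3*K^2) * exp (-s)" using key[OF \<open>s\<ge>0\<close>] by simp
    finally show "exp (A* s - s^3/3) \<le> exp (3*K^2) * exp (-s)" .
  qed
qed

definition integrand :: "complex poly \<Rightarrow> complex \<Rightarrow> real \<Rightarrow> real \<Rightarrow> complex" where
  "integrand \<phi> w t s = w * poly \<phi> (of_real s * w) * exp ((of_real s * w) ^ 3 / 3 + of_real t * (of_real s * w))"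

lemma ray_integral_alt: "ray_integral \<phi> w t = integral {0..} (integrand \<phi> w t)"
  unfolding ray_integral_def integrand_def[abs_def] by simp

lemma dirs_props: assumes "w \<in> dirs" shows "norm w = 1" "w ^ 3 = -1"
proof -
  have "cis (pi/3) ^ 3 = -1" using Complex.DeMoivre[of "pi/3" 3] by simp
  moreover have "cis (-(pi/3)) ^ 3 = -1" using Complex.DeMoivre[of "-(pi/3)" 3] by (simp add: complex_eq_iff)
  ultimately show "norm w = 1" "w ^ 3 = -1" using assms by (auto simp: dirs_def)
qed

lemma norm_exp_part:
  assumes "w \<in> dirs" "s \<ge> 0"
  shows "norm (exp ((of_real s * w) ^ 3 / 3 + of_real t * (of_real s * w))) \<le> exp (\<bar>t\<bar> * s - s^3/3)"
proof -
  have w: "norm w = 1" "w^3 = -1" using dirs_props[OF assms(1)] by auto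
  have e: "(of_real s * w) ^ 3 / 3 = of_real (-(s^3)/3)" by (simp add: power_mult_distrib w)
  have "Re ((of_real s * w) ^ 3 / 3 + of_real t * (of_real s * w)) = -(s^3)/3 + t * s * Re w"
    unfolding e by simp
  also have "t * s * Re w \<le> \<bar>t\<bar> * s"
  proof -
    have "t * s * Re w \<le> \<bar>t * s * Re w\<bar>" by simp
    also have "\<dots> = \<bar>t\<bar> * s * \<bar>Re w\<bar>" using assms(2) by (simp add: abs_mult)
    also have "\<dots> \<le> \<bar>t\<bar> * s * 1" using abs_Re_le_cmod[of w] w assms(2)
      by (intro mult_left_mono) auto
    finally show ?thesis by simp
  qed
  finally show ?thesis by (simp add: norm_exp_eq_Re)
qed

lemma poly_norm_bound:
  fixes \<phi> :: "complex poly" shows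
  "\<exists>K\<ge>0. \<forall>s\<ge>0. \<forall>w. norm w = 1 \<longrightarrow> norm (poly \<phi> (of_real s * w)) \<le> K * exp s"
proof (intro exI[of _ "\<Sum>i\<le>degree \<phi>. norm (coeff \<phi> i) * fact i"] conjI allI impI)
  show "0 \<le> (\<Sum>i\<le>degree \<phi>. norm (coeff \<phi> i) * fact i)" by (intro sum_nonneg) auto
  fix s :: real and w :: complex assume s: "s \<ge> 0" and w: "norm w = 1"
  have "norm (poly \<phi> (of_real s * w)) = norm (\<Sum>i\<le>degree \<phi>. coeff \<phi> i * (of_real s * w) ^ i)"
    by (simp add: poly_altdef)
  also have "\<dots> \<le> (\<Sum>i\<le>degree \<phi>. norm (coeff \<phi> i * (of_real s * w) ^ i))" by (rule norm_sum)
  also have "\<dots> = (\<Sum>i\<le>degree \<phi>. norm (coeff \<phi> i) * s ^ i)"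
    using s w by (simp add: norm_mult norm_power)
  also have "\<dots> \<le> (\<Sum>i\<le>degree \<phi>. norm (coeff \<phi> i) * (fact i * exp s))"
    using s pow_le_fact_exp by (intro sum_mono mult_left_mono) auto
  also have "\<dots> = (\<Sum>i\<le>degree \<phi>. norm (coeff \<phi> i) * fact i) * exp s"
    by (simp add: sum_distrib_right mult.assoc)
  finally show "norm (poly \<phi> (of_real s * w)) \<le> (\<Sum>i\<le>degree \<phi>. norm (coeff \<phi> i) * fact i) * exp s" .
qed

lemma poly_exp_bound:
  fixes \<phi> :: "complex poly" shows
  "\<exists>C. \<forall>s\<ge>0. \<forall>w. norm w = 1 \<longrightarrow> norm (poly \<phi> (of_real s * w)) * exp (A * s - s^3/3) \<le> C * exp (-s)"
proof -
  obtain K where K: "K \<ge> 0" "\<And>s w. s \<ge> 0 \<Longrightarrow> norm w = 1 \<Longrightarrow> norm (poly \<phi> (of_real s * w)) \<le> K * exp s"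
    using poly_norm_bound[of \<phi>] by blast
  obtain M where M: "\<And>s. s \<ge> 0 \<Longrightarrow> exp ((A+1) * s - s^3/3) \<le> M * exp (-s)"
    using exp_cubic_bound[of "A+1"] by blast
  show ?thesis
  proof (intro exI[of _ "K * M"] allI impI)
    fix s :: real and w :: complex assume s: "s \<ge> 0" and w: "norm w = 1"
    have "norm (poly \<phi> (of_real s * w)) * exp (A * s - s^3/3) \<le> K * exp s * exp (A * s - s^3/3)"
      using K(2)[OF s w] by (intro mult_right_mono) auto
    also have "\<dots> = K * exp ((A+1) * s - s^3/3)" by (simp add: mult.assoc exp_add[symmetric] algebra_simps)
    also have "\<dots> \<le> K * (M * exp (-s))" using M[OF s] K(1) by (intro mult_left_mono) auto
    finally show "norm (poly \<phi> (of_real s * w)) * exp (A * s - s^3/3) \<le> K * M * exp (-s)" by (simp add: mult.assoc)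
  qed
qed

lemma dom_integrable:
  fixes f :: "real \<Rightarrow> complex"
  assumes cont: "continuous_on {c..} f" and bnd: "\<And>s. s \<ge> c \<Longrightarrow> norm (f s) \<le> C * exp (-s)"
  shows "f integrable_on {c..}" "norm (integral {c..} f) \<le> C * exp (-c)"
proof -
  have g: "((\<lambda>s. C * exp (-s)) has_integral C * exp (-c)) {c..}"
    using has_integral_mult_right[OF has_integral_exp_minus_to_infinity[of 1 c], of C] by simp
  have leb: "{c..} \<in> sets lebesgue" by simp
  show fi: "f integrable_on {c..}"
    by (rule measurable_bounded_by_integrable_imp_integrable[OF continuous_imp_measurable_on_sets_lebesgue[OF cont leb]])
       (use g bnd leb in auto)
  have "norm (integral {c..} f) \<le> integral {c..} (\<lambda>s. C * exp (-s))"
    by (rule integral_norm_bound_integral[OF fi]) (use g bnd in auto)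
  also have "\<dots> = C * exp (-c)" using g by (rule integral_unique)
  finally show "norm (integral {c..} f) \<le> C * exp (-c)" .
qed

lemma exp_minus_at_top: "((\<lambda>x::real. exp (-x)) \<longlongrightarrow> 0) at_top"
  using filterlim_compose[OF exp_at_bot filterlim_uminus_at_bot_at_top] by (simp add: o_def)

lemma integrand_cont: "continuous_on S (integrand \<phi> w t)"
  unfolding integrand_def by (intro continuous_intros) auto

lemma integrand_bound:
  fixes \<phi> :: "complex poly"
  shows "\<exists>C. \<forall>w\<in>dirs. \<forall>t s. \<bar>t\<bar> \<le> A \<longrightarrow> s \<ge> 0 \<longrightarrow> norm (integrand \<phi> w t s) \<le> C * exp (-s)"
proof -
  obtain C where C: "\<And>s w. s \<ge> 0 \<Longrightarrow> norm w = 1 \<Longrightarrow> norm (poly \<phi> (of_real s * w)) * exp (A * s - s^3/3) \<le> C * exp (-s)"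
    using poly_exp_bound[of \<phi> A] by blast
  show ?thesis
  proof (intro exI[of _ C] ballI allI impI)
    fix w t s assume w: "w \<in> dirs" and t: "\<bar>t\<bar> \<le> A" and s: "(s::real) \<ge> 0"
    have nw: "norm w = 1" using dirs_props[OF w] by simp
    have "norm (integrand \<phi> w t s) = norm (poly \<phi> (of_real s * w)) * norm (exp ((of_real s * w) ^ 3 / 3 + of_real t * (of_real s * w)))"
      unfolding integrand_def by (simp add: norm_mult nw)
    also have "\<dots> \<le> norm (poly \<phi> (of_real s * w)) * exp (\<bar>t\<bar> * s - s^3/3)"
      by (intro mult_left_mono norm_exp_part w s) auto
    also have "\<dots> \<le> norm (poly \<phi> (of_real s * w)) * exp (A * s - s^3/3)"
      using t s by (intro mult_left_mono) (auto intro!: mult_right_mono)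
    also have "\<dots> \<le> C * exp (-s)" using C[OF s nw] .
    finally show "norm (integrand \<phi> w t s) \<le> C * exp (-s)" .
  qed
qed

lemma integrand_integrable:
  assumes "w \<in> dirs" shows "integrand \<phi> w t integrable_on {0..}"
proof -
  obtain C where "\<forall>w\<in>dirs. \<forall>t' s. \<bar>t'\<bar> \<le> \<bar>t\<bar> \<longrightarrow> s \<ge> 0 \<longrightarrow> norm (integrand \<phi> w t' s) \<le> C * exp (-s)"
    using integrand_bound[where \<phi>=\<phi> and A="\<bar>t\<bar>"] by blast
  then show ?thesis using assms by (intro dom_integrable(1)[where C=C] integrand_cont) auto
qed

lemma integrand_add: "integrand (\<phi> + \<psi>) w t s = integrand \<phi> w t s + integrand \<psi> w t s"
  unfolding integrand_def by (simp add: algebra_simps)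

lemma integrand_smult: "integrand (smult c \<phi>) w t s = c * integrand \<phi> w t s"
  unfolding integrand_def by (simp add: algebra_simps)

lemma ray_add: assumes "w \<in> dirs"
  shows "ray_integral (\<phi> + \<psi>) w t = ray_integral \<phi> w t + ray_integral \<psi> w t"
  unfolding ray_integral_alt integrand_add
  by (rule integral_add[OF integrand_integrable[OF assms] integrand_integrable[OF assms]])

lemma ray_smult: "ray_integral (smult c \<phi>) w t = c * ray_integral \<phi> w t"
  unfolding ray_integral_alt integrand_smult by simp

lemma dom_tail:
  fixes f :: "real \<Rightarrow> complex"
  assumes cont: "continuous_on {0..} f" and bnd: "\<And>s. s \<ge> 0 \<Longrightarrow> norm (f s) \<le> C * exp (-s)"
    and R: "R \<ge> 0"
  shows "norm (integral {0..} f - integral {0..R} f) \<le> C * exp (-R)"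
proof -
  have i0: "f integrable_on {0..}" using dom_integrable(1)[OF cont bnd] by auto
  have iR: "f integrable_on {R..}" 
    using dom_integrable(1)[OF continuous_on_subset[OF cont], of R C] bnd R by auto
  have nR: "norm (integral {R..} f) \<le> C * exp (-R)"
    using dom_integrable(2)[OF continuous_on_subset[OF cont], of R C] bnd R by auto
  have i0R: "f integrable_on {0..R}" using integrable_on_subinterval[OF i0] by auto
  have "(f has_integral (integral {0..R} f + integral {R..} f)) ({0..R} \<union> {R..})"
    by (rule has_integral_Un[OF integrable_integral[OF i0R] integrable_integral[OF iR]])
       (use R in \<open>auto simp: negligible_sing\<close>)
  moreover have "{0..R} \<union> {R..} = {0::real..}" using R by auto
  ultimately have "integral {0..} f = integral {0..R} f + integral {R..} f"
    by (simp add: integral_unique)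
  thus ?thesis using nR by simp
qed

lemma ray_ibp:
  assumes w: "w \<in> dirs"
  shows "ray_integral (pderiv \<phi> + [:of_real t, 0, 1:] * \<phi>) w t = - poly \<phi> 0"
proof -
  define g where "g z = poly \<phi> z * exp (z ^ 3 / 3 + of_real t * z)" for z :: complex
  define G where "G s = g (of_real s * w)" for s :: real
  define f where "f = integrand (pderiv \<phi> + [:of_real t, 0, 1:] * \<phi>) w t"
  have dg: "(g has_field_derivative (poly (pderiv \<phi>) z + (z^2 + of_real t) * poly \<phi> z) * exp (z ^ 3 / 3 + of_real t * z)) (at z)" for z
    unfolding g_def by (auto intro!: derivative_eq_intros simp: algebra_simps power2_eq_square)
  have dG: "(G has_vector_derivative f s) (at s)" for s
  proof -
    have "((\<lambda>s. of_real s * w) has_vector_derivative w) (at s)"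
      using has_vector_derivative_mult_left[OF has_vector_derivative_of_real[OF DERIV_ident], of w] by simp
    from field_vector_diff_chain_at[OF this dg]
    show ?thesis unfolding G_def f_def integrand_def o_def
      by (simp add: algebra_simps power2_eq_square)
  qed
  obtain C where C: "\<forall>w\<in>dirs. \<forall>t' s. \<bar>t'\<bar> \<le> \<bar>t\<bar> \<longrightarrow> s \<ge> 0 \<longrightarrow> norm (integrand (pderiv \<phi> + [:of_real t, 0, 1:] * \<phi>) w t' s) \<le> C * exp (-s)"
    using integrand_bound[where \<phi>="pderiv \<phi> + [:of_real t, 0, 1:] * \<phi>" and A="\<bar>t\<bar>"] by (elim exE) assumption
  have Cb: "\<And>s. s \<ge> 0 \<Longrightarrow> norm (f s) \<le> C * exp (-s)" unfolding f_def using w C by blast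
  have fc: "continuous_on {0..} f" unfolding f_def by (rule integrand_cont)
  obtain C2 where C2: "\<And>s w. s \<ge> 0 \<Longrightarrow> norm w = 1 \<Longrightarrow> norm (poly \<phi> (of_real s * w)) * exp (\<bar>t\<bar> * s - s^3/3) \<le> C2 * exp (-s)"
    using poly_exp_bound[of \<phi> "\<bar>t\<bar>"] by blast
  have Gb: "norm (G s) \<le> C2 * exp (-s)" if s: "s \<ge> 0" for s
  proof -
    have "norm (G s) = norm (poly \<phi> (of_real s * w)) * norm (exp ((of_real s * w) ^ 3 / 3 + of_real t * (of_real s * w)))"
      unfolding G_def g_def by (simp add: norm_mult)
    also have "\<dots> \<le> norm (poly \<phi> (of_real s * w)) * exp (\<bar>t\<bar> * s - s^3/3)"
      by (intro mult_left_mono norm_exp_part w s) auto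
    also have "\<dots> \<le> C2 * exp (-s)" using C2[OF s] dirs_props[OF w] by auto
    finally show ?thesis .
  qed
  have ftc: "integral {0..R} f = G R - G 0" if "R \<ge> 0" for R
    using fundamental_theorem_of_calculus[OF that, of G f] dG
    by (auto intro: has_vector_derivative_at_within integral_unique)
  have lim1: "((\<lambda>R. integral {0..R} f) \<longlongrightarrow> integral {0..} f) at_top"
  proof -
    have "((\<lambda>R. integral {0..R} f - integral {0..} f) \<longlongrightarrow> 0) at_top"
    proof (rule Lim_null_comparison)
      show "\<forall>\<^sub>F R in at_top. norm (integral {0..R} f - integral {0..} f) \<le> C * exp (-R)"
        using eventually_ge_at_top[of "0::real"]
        by eventually_elim (use dom_tail[OF fc Cb] in \<open>auto simp: norm_minus_commute\<close>)
      show "((\<lambda>R. C * exp (-R)) \<longlongrightarrow> 0) at_top"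
        using tendsto_mult_right_zero[OF exp_minus_at_top] by simp
    qed
    thus ?thesis by (simp add: LIM_zero_iff)
  qed
  have lim2: "((\<lambda>R. integral {0..R} f) \<longlongrightarrow> - G 0) at_top"
  proof -
    have "(G \<longlongrightarrow> 0) at_top"
    proof (rule Lim_null_comparison)
      show "\<forall>\<^sub>F R in at_top. norm (G R) \<le> C2 * exp (-R)"
        using eventually_ge_at_top[of "0::real"] by eventually_elim (use Gb in auto)
      show "((\<lambda>R. C2 * exp (-R)) \<longlongrightarrow> 0) at_top"
        using tendsto_mult_right_zero[OF exp_minus_at_top] by simp
    qed
    hence "((\<lambda>R. G R - G 0) \<longlongrightarrow> 0 - G 0) at_top" by (intro tendsto_intros)
    moreover have "\<forall>\<^sub>F R in at_top. G R - G 0 = integral {0..R} f"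
      using eventually_ge_at_top[of "0::real"] by eventually_elim (use ftc in auto)
    ultimately show ?thesis by (simp add: tendsto_cong)
  qed
  have "integral {0..} f = - G 0" using tendsto_unique[OF _ lim1 lim2] by simp
  moreover have "G 0 = poly \<phi> 0" unfolding G_def g_def by simp
  ultimately show ?thesis unfolding ray_integral_alt f_def by simp
qed

lemma exp_rem_bound: fixes z :: complex shows "norm (exp z - 1 - z) \<le> exp (norm z) * norm z ^ 2"
  using Taylor_exp_field[of z 1] by (simp add: numeral_2_eq_2 power_Suc diff_diff_eq)

lemma ray_deriv:
  assumes w: "w \<in> dirs"
  shows "((\<lambda>t. ray_integral \<phi> w t) has_vector_derivative ray_integral ([:0,1:] * \<phi>) w t) (at t)"
proof -
  have nw: "norm w = 1" using dirs_props[OF w] by simp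
  obtain C where C: "\<And>s w. s \<ge> 0 \<Longrightarrow> norm w = 1 \<Longrightarrow> norm (poly \<phi> (of_real s * w)) * exp ((\<bar>t\<bar> + 2) * s - s^3/3) \<le> C * exp (-s)"
    using poly_exp_bound[of \<phi> "\<bar>t\<bar> + 2"] by blast
  define E where "E s = exp ((of_real s * w) ^ 3 / 3 + of_real t * (of_real s * w))" for s
  define Rm where "Rm h s = integrand \<phi> w (t+h) s - integrand \<phi> w t s - of_real h * integrand ([:0,1:] * \<phi>) w t s" for h s
  have Rm_eq: "Rm h s = w * poly \<phi> (of_real s * w) * E s * (exp (of_real h * (of_real s * w)) - 1 - of_real h * (of_real s * w))" for h s
  proof -
    have "exp ((of_real s * w) ^ 3 / 3 + of_real (t+h) * (of_real s * w)) = E s * exp (of_real h * (of_real s * w))"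
      unfolding E_def by (simp add: exp_add[symmetric] algebra_simps)
    thus ?thesis unfolding Rm_def integrand_def E_def[symmetric] by (simp add: algebra_simps)
  qed
  have Rm_bound: "norm (Rm h s) \<le> (2 * h^2 * C) * exp (-s)" if h: "\<bar>h\<bar> \<le> 1" and s: "s \<ge> 0" for h s
  proof -
    let ?z = "of_real h * (of_real s * w) :: complex"
    have nz: "norm ?z = \<bar>h\<bar> * s" using s by (simp add: norm_mult nw)
    have "norm (exp ?z - 1 - ?z) \<le> exp (\<bar>h\<bar> * s) * (\<bar>h\<bar> * s) ^ 2"
      using exp_rem_bound[of ?z] unfolding nz .
    also have "\<dots> \<le> exp s * (h^2 * s^2)"
      using h s by (intro mult_mono) (auto simp: power_mult_distrib mult_left_le_one_le)
    also have "\<dots> \<le> exp s * (h^2 * (2 * exp s))"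
      using pow_le_fact_exp[OF s, of 2] by (intro mult_left_mono) (auto simp: numeral_2_eq_2)
    finally have ez: "norm (exp ?z - 1 - ?z) \<le> 2 * h^2 * (exp s * exp s)" by (simp add: algebra_simps)
    have "norm (Rm h s) = norm (poly \<phi> (of_real s * w)) * norm (E s) * norm (exp ?z - 1 - ?z)"
      unfolding Rm_eq by (simp add: norm_mult nw)
    also have "\<dots> \<le> norm (poly \<phi> (of_real s * w)) * exp (\<bar>t\<bar> * s - s^3/3) * (2 * h^2 * (exp s * exp s))"
      unfolding E_def by (intro mult_mono mult_left_mono norm_exp_part w s ez) auto
    also have "\<dots> = 2 * h^2 * (norm (poly \<phi> (of_real s * w)) * exp ((\<bar>t\<bar> + 2) * s - s^3/3))"
      by (simp add: exp_add[symmetric] algebra_simps)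
    also have "\<dots> \<le> 2 * h^2 * (C * exp (-s))"
      using C[OF s nw] by (intro mult_left_mono) auto
    finally show ?thesis by (simp add: algebra_simps)
  qed
  have Rm_int: "norm (integral {0..} (Rm h)) \<le> 2 * h^2 * C" if h: "\<bar>h\<bar> \<le> 1" for h
  proof -
    have "continuous_on {0..} (Rm h)" unfolding Rm_def by (intro continuous_intros integrand_cont)
    from dom_integrable(2)[OF this, of "2 * h^2 * C"] Rm_bound[OF h] show ?thesis by simp
  qed
  have Rm_integral: "ray_integral \<phi> w (t+h) - ray_integral \<phi> w t - h *\<^sub>R ray_integral ([:0,1:] * \<phi>) w t = integral {0..} (Rm h)" for h
  proof -
    have i1: "integrand \<phi> w (t+h) integrable_on {0..}" "integrand \<phi> w t integrable_on {0..}"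
      "integrand ([:0,1:] * \<phi>) w t integrable_on {0..}" using integrand_integrable[OF w] by auto
    have "integral {0..} (Rm h) = integral {0..} (\<lambda>s. integrand \<phi> w (t+h) s - integrand \<phi> w t s) - integral {0..} (\<lambda>s. of_real h * integrand ([:0,1:] * \<phi>) w t s)"
      unfolding Rm_def by (intro integral_diff integrable_diff i1 integrable_on_cmult_left)
    also have "\<dots> = ray_integral \<phi> w (t+h) - ray_integral \<phi> w t - h *\<^sub>R ray_integral ([:0,1:] * \<phi>) w t"
      unfolding ray_integral_alt by (simp add: integral_diff i1 scaleR_conv_of_real)
    finally show ?thesis by simp
  qed
  show ?thesis unfolding has_vector_derivative_def has_derivative_at
  proof (intro conjI bounded_linear_scaleR_left)
    show "(\<lambda>h. norm (ray_integral \<phi> w (t + h) - ray_integral \<phi> w t - h *\<^sub>R ray_integral ([:0,1:] * \<phi>) w t) / norm h) \<midarrow>0\<rightarrow> 0"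
    proof (rule Lim_null_comparison)
      show "\<forall>\<^sub>F h in at 0. norm (norm (ray_integral \<phi> w (t + h) - ray_integral \<phi> w t - h *\<^sub>R ray_integral ([:0,1:] * \<phi>) w t) / norm h) \<le> 2 * C * \<bar>h\<bar>"
      proof -
        have "\<forall>\<^sub>F h in at (0::real). \<bar>h\<bar> < 1"
          using eventually_at[of "\<lambda>h. \<bar>h\<bar> < 1" 0 UNIV] by (auto intro: exI[of _ 1])
        thus ?thesis
        proof eventually_elim
          case (elim h)
          have "norm (integral {0..} (Rm h)) / \<bar>h\<bar> \<le> 2 * h^2 * C / \<bar>h\<bar>"
            using Rm_int[of h] elim by (intro divide_right_mono) auto
          also have "\<dots> = 2 * C * \<bar>h\<bar>"
          proof (cases "h = 0")
            case False
            thus ?thesis using False by (simp add: divide_eq_eq power2_eq_square algebra_simps)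
          qed simp
          finally show ?case unfolding Rm_integral by simp
        qed
      qed
      show "((\<lambda>h. 2 * C * \<bar>h\<bar>) \<longlongrightarrow> 0) (at 0)"
        using tendsto_mult_right_zero[OF tendsto_rabs_zero[OF tendsto_ident_at], of "2*C"] by simp
    qed
  qed
qed

lemma cf_add: "src \<in> dirs \<Longrightarrow> tgt \<in> dirs \<Longrightarrow> contour_functional src tgt t (\<phi> + \<psi>) = contour_functional src tgt t \<phi> + contour_functional src tgt t \<psi>"
  unfolding contour_functional_def by (simp add: ray_add)

lemma L_add:
  assumes D: "\<And>j. j < r \<Longrightarrow> src j \<in> dirs \<and> tgt j \<in> dirs"
  shows "L_fun r lam src tgt t (\<phi> + \<psi>) = L_fun r lam src tgt t \<phi> + L_fun r lam src tgt t \<psi>"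
  unfolding L_fun_def by (simp add: cf_add D sum.distrib[symmetric] algebra_simps)

lemma L_smult: "L_fun r lam src tgt t (smult c \<phi>) = c * L_fun r lam src tgt t \<phi>"
  unfolding L_fun_def contour_functional_def by (simp add: ray_smult sum_distrib_left algebra_simps)

lemma L_zero: "L_fun r lam src tgt t 0 = 0"
  using L_smult[where r=r and lam=lam and src=src and tgt=tgt and t=t and c=0 and \<phi>=0] by simp

lemma L_uminus: "L_fun r lam src tgt t (- \<phi>) = - L_fun r lam src tgt t \<phi>"
  using L_smult[where r=r and lam=lam and src=src and tgt=tgt and t=t and c="-1" and \<phi>=\<phi>] by simp

lemma L_diff:
  assumes D: "\<And>j. j < r \<Longrightarrow> src j \<in> dirs \<and> tgt j \<in> dirs"
  shows "L_fun r lam src tgt t (\<phi> - \<psi>) = L_fun r lam src tgt t \<phi> - L_fun r lam src tgt t \<psi>"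
  using L_add[OF D, where t=t and \<phi>=\<phi> and \<psi>="-\<psi>" and lam=lam] L_uminus[where r=r and lam=lam and src=src and tgt=tgt and t=t and \<phi>=\<psi>] by simp

lemma L_sum:
  assumes D: "\<And>j. j < r \<Longrightarrow> src j \<in> dirs \<and> tgt j \<in> dirs"
  shows "L_fun r lam src tgt t (\<Sum>k\<in>A. f k) = (\<Sum>k\<in>A. L_fun r lam src tgt t (f k))"
proof (induction A rule: infinite_finite_induct)
  case (infinite A) thus ?case by (simp add: L_zero)
next
  case empty thus ?case by (simp add: L_zero)
next
  case (insert x F) thus ?case by (simp add: L_add[OF D])
qed

lemma L_ibp:
  assumes D: "\<And>j. j < r \<Longrightarrow> src j \<in> dirs \<and> tgt j \<in> dirs"
  shows "L_fun r lam src tgt t (pderiv \<phi> + [:of_real t, 0, 1:] * \<phi>) = 0"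
proof -
  have "contour_functional (src j) (tgt j) t (pderiv \<phi> + [:of_real t, 0, 1:] * \<phi>) = 0" if "j < r" for j
    unfolding contour_functional_def using ray_ibp[of "tgt j" \<phi> t] ray_ibp[of "src j" \<phi> t] D[OF that] by simp
  thus ?thesis unfolding L_fun_def by simp
qed

lemma L_deriv:
  assumes D: "\<And>j. j < r \<Longrightarrow> src j \<in> dirs \<and> tgt j \<in> dirs"
  shows "((\<lambda>s. L_fun r lam src tgt s \<phi>) has_vector_derivative L_fun r lam src tgt t ([:0,1:] * \<phi>)) (at t)"
  unfolding L_fun_def contour_functional_def
  by (intro has_vector_derivative_sum has_vector_derivative_mult_right has_vector_derivative_diff ray_deriv)
     (use D in auto)

definition PD :: "(real \<Rightarrow> complex poly) \<Rightarrow> complex poly \<Rightarrow> real \<Rightarrow> bool" where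
  "PD F F' t \<longleftrightarrow> (\<forall>k. ((\<lambda>s. coeff (F s) k) has_vector_derivative coeff F' k) (at t))"

lemma PD_const: "PD (\<lambda>s. c) 0 t"
  unfolding PD_def by (auto intro: derivative_eq_intros)

lemma PD_add: "PD F F' t \<Longrightarrow> PD G G' t \<Longrightarrow> PD (\<lambda>s. F s + G s) (F' + G') t"
  unfolding PD_def by (auto intro!: derivative_eq_intros)

lemma PD_diff: "PD F F' t \<Longrightarrow> PD G G' t \<Longrightarrow> PD (\<lambda>s. F s - G s) (F' - G') t"
  unfolding PD_def by (auto intro!: derivative_eq_intros)

lemma PD_pCons: "(f has_vector_derivative f') (at t) \<Longrightarrow> PD F F' t \<Longrightarrow> PD (\<lambda>s. pCons (f s) (F s)) (pCons f' F') t"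
  unfolding PD_def by (auto simp: coeff_pCons split: nat.split)

lemma PD_mult: 
  assumes "PD F F' t" "PD G G' t"
  shows "PD (\<lambda>s. F s * G s) (F' * G t + F t * G') t"
  unfolding PD_def
proof
  fix k
  have "((\<lambda>s. \<Sum>i\<le>k. coeff (F s) i * coeff (G s) (k - i)) has_vector_derivative
         (\<Sum>i\<le>k. coeff (F t) i * coeff G' (k - i) + coeff F' i * coeff (G t) (k - i))) (at t)"
    using assms unfolding PD_def by (intro has_vector_derivative_sum has_vector_derivative_mult) auto
  thus "((\<lambda>s. coeff (F s * G s) k) has_vector_derivative coeff (F' * G t + F t * G') k) (at t)"
    by (simp only: coeff_add coeff_mult sum.distrib[symmetric] add.commute)
qed

lemma PD_smult:
  assumes "(f has_vector_derivative f') (at t)" "PD F F' t"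
  shows "PD (\<lambda>s. smult (f s) (F s)) (smult f' (F t) + smult (f t) F') t"
proof -
  have "PD (\<lambda>s. [:f s:] * F s) ([:f':] * F t + [:f t:] * F') t"
    by (intro PD_mult PD_pCons assms PD_const)
  thus ?thesis by simp
qed

lemma PD_transform:
  assumes "open S" "t \<in> S" "\<And>s. s \<in> S \<Longrightarrow> F s = G s" "PD F F' t"
  shows "PD G F' t"
  using assms unfolding PD_def
  by (auto intro: has_vector_derivative_transform_within_open)

lemma PD_const_coeff:
  assumes "open S" "t \<in> S" "\<And>s. s \<in> S \<Longrightarrow> coeff (F s) k = c" "PD F F' t"
  shows "coeff F' k = 0"
proof -
  have "((\<lambda>s. c) has_vector_derivative 0) (at t)" by (rule derivative_intros)
  hence "((\<lambda>s. coeff (F s) k) has_vector_derivative 0) (at t)"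
    by (rule has_vector_derivative_transform_within_open[OF _ assms(1,2)]) (use assms(3) in auto)
  moreover have "((\<lambda>s. coeff (F s) k) has_vector_derivative coeff F' k) (at t)" using assms(4) by (simp add: PD_def)
  ultimately show ?thesis using vector_derivative_unique_at by metis
qed

lemma vd_iff:
  fixes f :: "real \<Rightarrow> complex"
  shows "(f has_vector_derivative D) (at t) \<longleftrightarrow> ((\<lambda>y. (f y - f t) / of_real (y - t)) \<longlongrightarrow> D) (at t)"
proof -
  have "(f has_vector_derivative D) (at t) \<longleftrightarrow> ((\<lambda>y. norm (f y - f t - (y - t) *\<^sub>R D) / norm (y - t)) \<longlongrightarrow> 0) (at t)"
    unfolding has_vector_derivative_def has_derivative_iff_norm by (simp add: bounded_linear_scaleR_left)
  also have "\<dots> \<longleftrightarrow> ((\<lambda>y. norm ((f y - f t) / of_real (y - t) - D)) \<longlongrightarrow> 0) (at t)"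
  proof (rule tendsto_cong)
    have "\<forall>\<^sub>F y in at t. y \<noteq> t" by (simp add: eventually_at_filter)
    thus "\<forall>\<^sub>F y in at t. norm (f y - f t - (y - t) *\<^sub>R D) / norm (y - t) = norm ((f y - f t) / of_real (y - t) - D)"
    proof eventually_elim
      case (elim y)
      hence "(f y - f t) / of_real (y - t) - D = (f y - f t - (y - t) *\<^sub>R D) / of_real (y - t)"
        by (simp add: field_simps scaleR_conv_of_real)
      thus ?case by (simp add: norm_divide del: of_real_diff)
    qed
  qed
  also have "\<dots> \<longleftrightarrow> ((\<lambda>y. (f y - f t) / of_real (y - t)) \<longlongrightarrow> D) (at t)"
    by (simp add: tendsto_norm_zero_iff LIM_zero_iff)
  finally show ?thesis .
qed

lemma sqrt_deriv:
  fixes f :: "real \<Rightarrow> complex"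
  assumes cont: "isCont f t" and nz: "f t \<noteq> 0" and d: "((\<lambda>s. (f s)^2) has_vector_derivative D) (at t)"
  shows "(f has_vector_derivative D / (2 * f t)) (at t)"
proof -
  have ft: "(f \<longlongrightarrow> f t) (at t)" using cont by (simp add: isCont_def)
  have q2: "((\<lambda>y. ((f y)^2 - (f t)^2) / of_real (y - t)) \<longlongrightarrow> D) (at t)"
    using d by (simp add: vd_iff)
  have sum: "((\<lambda>y. f y + f t) \<longlongrightarrow> 2 * f t) (at t)"
    using tendsto_add[OF ft tendsto_const[of "f t"]] by simp
  have eventually_neq_at: "\<forall>\<^sub>F y in at t. y \<noteq> t" for t :: real by (simp add: eventually_at_filter)
  have ev: "\<forall>\<^sub>F y in at t. f y + f t \<noteq> 0"
    using tendsto_imp_eventually_ne[OF sum] nz by simp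
  have "((\<lambda>y. (((f y)^2 - (f t)^2) / of_real (y - t)) / (f y + f t)) \<longlongrightarrow> D / (2 * f t)) (at t)"
    using nz by (intro tendsto_divide q2 sum) auto
  moreover have "\<forall>\<^sub>F y in at t. (((f y)^2 - (f t)^2) / of_real (y - t)) / (f y + f t) = (f y - f t) / of_real (y - t)"
    using ev eventually_neq_at[of t]
  proof eventually_elim
    case (elim y)
    hence ne: "complex_of_real y - complex_of_real t \<noteq> 0" by simp
    have "(f y)^2 - (f t)^2 = (f y - f t) * (f y + f t)" by (simp add: power2_eq_square algebra_simps)
    thus ?case using elim ne by (simp del: of_real_diff)
  qed
  ultimately have "((\<lambda>y. (f y - f t) / of_real (y - t)) \<longlongrightarrow> D / (2 * f t)) (at t)"
    by (simp add: tendsto_cong)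
  thus ?thesis by (simp add: vd_iff)
qed

lemma L_expand:
  assumes D: "\<And>j. j < r \<Longrightarrow> src j \<in> dirs \<and> tgt j \<in> dirs" and deg: "degree F \<le> N"
  shows "L_fun r lam src tgt t F = (\<Sum>k\<le>N. coeff F k * L_fun r lam src tgt t (monom 1 k))"
proof -
  have "F = (\<Sum>k\<le>N. smult (coeff F k) (monom 1 k))"
    using poly_as_sum_of_monoms'[OF deg] by (simp add: smult_monom)
  hence "L_fun r lam src tgt t F = L_fun r lam src tgt t (\<Sum>k\<le>N. smult (coeff F k) (monom 1 k))" by simp
  also have "\<dots> = (\<Sum>k\<le>N. coeff F k * L_fun r lam src tgt t (monom 1 k))"
    by (simp add: L_sum[OF D] L_smult)
  finally show ?thesis .
qed

lemma L_X_expand: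
  assumes D: "\<And>j. j < r \<Longrightarrow> src j \<in> dirs \<and> tgt j \<in> dirs" and deg: "degree F \<le> N"
  shows "L_fun r lam src tgt t ([:0,1:] * F) = (\<Sum>k\<le>N. coeff F k * L_fun r lam src tgt t ([:0,1:] * monom 1 k))"
proof -
  have "F = (\<Sum>k\<le>N. smult (coeff F k) (monom 1 k))"
    using poly_as_sum_of_monoms'[OF deg] by (simp add: smult_monom)
  hence "[:0,1:] * F = [:0,1:] * (\<Sum>k\<le>N. smult (coeff F k) (monom 1 k))" by simp
  also have "\<dots> = (\<Sum>k\<le>N. smult (coeff F k) ([:0,1:] * monom 1 k))"
    by (simp only: sum_distrib_left mult_smult_right)
  finally have "[:0,1:] * F = (\<Sum>k\<le>N. smult (coeff F k) ([:0,1:] * monom 1 k))" .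
  hence "L_fun r lam src tgt t ([:0,1:] * F) = L_fun r lam src tgt t (\<Sum>k\<le>N. smult (coeff F k) ([:0,1:] * monom 1 k))" by simp
  also have "\<dots> = (\<Sum>k\<le>N. coeff F k * L_fun r lam src tgt t ([:0,1:] * monom 1 k))"
    by (simp only: L_sum[OF D] L_smult)
  finally show ?thesis .
qed

lemma L_PD:
  assumes D: "\<And>j. j < r \<Longrightarrow> src j \<in> dirs \<and> tgt j \<in> dirs"
    and S: "open S" "t \<in> S" and pd: "PD F F' t" and deg: "\<And>s. s \<in> S \<Longrightarrow> degree (F s) \<le> N"
  shows "((\<lambda>s. L_fun r lam src tgt s (F s)) has_vector_derivative
            L_fun r lam src tgt t F' + L_fun r lam src tgt t ([:0,1:] * F t)) (at t)"
proof -
  have degF': "degree F' \<le> N"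
  proof (rule degree_le, intro allI impI)
    fix k assume "N < k"
    hence "\<And>s. s \<in> S \<Longrightarrow> coeff (F s) k = 0" using deg by (meson coeff_eq_0 le_less_trans)
    thus "coeff F' k = 0" using PD_const_coeff[OF S _ pd] by blast
  qed
  have "((\<lambda>s. \<Sum>k\<le>N. coeff (F s) k * L_fun r lam src tgt s (monom 1 k)) has_vector_derivative
         (\<Sum>k\<le>N. coeff (F t) k * L_fun r lam src tgt t ([:0,1:] * monom 1 k) + coeff F' k * L_fun r lam src tgt t (monom 1 k))) (at t)"
    using pd unfolding PD_def by (intro has_vector_derivative_sum has_vector_derivative_mult L_deriv[OF D]) auto
  hence "((\<lambda>s. L_fun r lam src tgt s (F s)) has_vector_derivative
         (\<Sum>k\<le>N. coeff (F t) k * L_fun r lam src tgt t ([:0,1:] * monom 1 k) + coeff F' k * L_fun r lam src tgt t (monom 1 k))) (at t)"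
    by (rule has_vector_derivative_transform_within_open[OF _ S]) (simp add: L_expand[OF D deg])
  moreover have "(\<Sum>k\<le>N. coeff (F t) k * L_fun r lam src tgt t ([:0,1:] * monom 1 k) + coeff F' k * L_fun r lam src tgt t (monom 1 k))
      = L_fun r lam src tgt t F' + L_fun r lam src tgt t ([:0,1:] * F t)"
    by (simp only: sum.distrib L_expand[OF D degF', symmetric] L_X_expand[OF D deg[OF S(2)], symmetric] add.commute)
  ultimately show ?thesis by simp
qed



lemma vd_inverse:
  fixes f :: "real \<Rightarrow> complex"
  assumes "(f has_vector_derivative f') (at t)" "f t \<noteq> 0"
  shows "((\<lambda>s. inverse (f s)) has_vector_derivative (- f' / (f t)^2)) (at t)"
proof -
  from field_vector_diff_chain_at[OF assms(1) DERIV_inverse[OF assms(2)]]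
  show ?thesis by (simp add: o_def power2_eq_square field_simps)
qed

lemma vd_div:
  fixes f g :: "real \<Rightarrow> complex"
  assumes "(f has_vector_derivative f') (at t)" "(g has_vector_derivative g') (at t)" "g t \<noteq> 0"
  shows "((\<lambda>s. f s / g s) has_vector_derivative ((f' * g t - f t * g') / (g t)^2)) (at t)"
proof -
  have "((\<lambda>s. f s * inverse (g s)) has_vector_derivative (f t * (- g' / (g t)^2) + f' * inverse (g t))) (at t)"
    by (intro has_vector_derivative_mult assms vd_inverse)
  thus ?thesis using assms(3) by (simp add: divide_inverse[symmetric] power2_eq_square field_simps)
qed

locale OPS =
  fixes r :: nat and lam src tgt :: "nat \<Rightarrow> complex" and I :: "real set"
    and p :: "nat \<Rightarrow> real \<Rightarrow> complex poly" and a b :: "nat \<Rightarrow> real \<Rightarrow> complex"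
  assumes D: "\<And>j. j < r \<Longrightarrow> src j \<in> dirs \<and> tgt j \<in> dirs"
    and I_open: "open I"
    and p_deg: "\<And>t n. t \<in> I \<Longrightarrow> degree (p n t) = n \<and> p n t \<noteq> 0"
    and p_orth: "\<And>t n m. t \<in> I \<Longrightarrow>
                   L_fun r lam src tgt t (p n t * p m t) = (if n = m then 1 else 0)"
    and p_cont: "\<And>n. continuous_on I (\<lambda>s. lead_coeff (p n s))"
    and a_def: "\<And>t n. t \<in> I \<Longrightarrow> n \<ge> 1 \<Longrightarrow>
                   a n t = lead_coeff (p (n - 1) t) / lead_coeff (p n t)"
    and recur: "\<And>t n. t \<in> I \<Longrightarrow>
                   smult (a (Suc n) t) (p (Suc n) t)
                     = [:- b n t, 1:] * p n t - (if n = 0 then 0 else smult (a n t) (p (n - 1) t))"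
begin

abbreviation "L \<equiv> L_fun r lam src tgt"

lemma Ladd: "L t (f + g) = L t f + L t g" by (rule L_add[OF D])
lemma Ldiff: "L t (f - g) = L t f - L t g" by (rule L_diff[OF D])
lemmas Lsimps = Ladd Ldiff L_smult L_zero L_uminus

lemma lc_nz: "t \<in> I \<Longrightarrow> lead_coeff (p n t) \<noteq> 0"
  by (metis leading_coeff_0_iff p_deg)

lemma coeff_p_high: "t \<in> I \<Longrightarrow> n < k \<Longrightarrow> coeff (p n t) k = 0"
  using p_deg by (simp add: coeff_eq_0)

lemma coeff_p_top: "t \<in> I \<Longrightarrow> coeff (p n t) n = lead_coeff (p n t)"
  using p_deg by simp

lemma orth_low_aux:
  assumes t: "t \<in> I"
  shows "d \<le> N \<Longrightarrow> (\<forall>k\<ge>d. coeff q k = 0) \<Longrightarrow> L t (p N t * q) = 0"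
proof (induction d arbitrary: q)
  case 0
  hence "q = 0" by (simp add: poly_eq_iff)
  thus ?case by (simp add: L_zero)
next
  case (Suc m)
  define c where "c = coeff q m / lead_coeff (p m t)"
  define q' where "q' = q - smult c (p m t)"
  have "\<forall>k\<ge>m. coeff q' k = 0"
  proof (intro allI impI)
    fix k assume "m \<le> k"
    then consider "k = m" | "k > m" by linarith
    thus "coeff q' k = 0"
    proof cases
      case 1 thus ?thesis using lc_nz[OF t, of m] coeff_p_top[OF t, of m] by (simp add: q'_def c_def)
    next
      case 2 thus ?thesis using Suc.prems coeff_p_high[OF t 2] by (simp add: q'_def)
    qed
  qed
  hence "L t (p N t * q') = 0" using Suc by simp
  moreover have "q = q' + smult c (p m t)" by (simp add: q'_def)
  moreover have "L t (p N t * p m t) = 0" using p_orth[OF t] Suc.prems by simp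
  ultimately show ?case by (simp add: distrib_left Lsimps)
qed

lemma orth_low: "t \<in> I \<Longrightarrow> (\<And>k. k \<ge> N \<Longrightarrow> coeff q k = 0) \<Longrightarrow> L t (p N t * q) = 0"
  using orth_low_aux[of t N N q] by auto

lemma Xp: "t \<in> I \<Longrightarrow> [:0,1:] * p n t = smult (a (Suc n) t) (p (Suc n) t) + smult (b n t) (p n t)
             + (if n = 0 then 0 else smult (a n t) (p (n - 1) t))"
  using recur[of t n] by (simp add: mult_pCons_left algebra_simps)

lemma a_nz: "t \<in> I \<Longrightarrow> n \<ge> 1 \<Longrightarrow> a n t \<noteq> 0"
  using a_def lc_nz by simp

lemma quad: fixes Q :: "complex poly" shows "[:c,0,1:] * Q = smult c Q + [:0,1:] * ([:0,1:] * Q)"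
  by (simp add: mult_pCons_left)

lemma pderiv_low: "t \<in> I \<Longrightarrow> n \<le> k \<Longrightarrow> coeff (pderiv (p n t)) k = 0"
  by (simp add: coeff_pderiv coeff_p_high)

lemma string1:
  assumes t: "t \<in> I"
  shows "(a (Suc m) t)^2 + (a (Suc (Suc m)) t)^2 + (b (Suc m) t)^2 + of_real t = 0"
proof -
  define P where "P = p (Suc m) t"
  have z: "L t (pderiv (P*P) + [:of_real t,0,1:]*(P*P)) = 0" by (rule L_ibp[OF D])
  have e: "pderiv (P*P) + [:of_real t,0,1:]*(P*P) = P * pderiv P + P * pderiv P + smult (of_real t) (P*P) + ([:0,1:]*P)*([:0,1:]*P)"
    unfolding quad by (simp add: pderiv_mult algebra_simps)
  have l1: "L t (P * pderiv P) = 0" unfolding P_def by (rule orth_low[OF t pderiv_low[OF t]])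
  have l2: "L t (P * P) = 1" unfolding P_def using p_orth[OF t] by simp
  have l3: "L t (([:0,1:]*P)*([:0,1:]*P)) = (a (Suc (Suc m)) t)^2 + (b (Suc m) t)^2 + (a (Suc m) t)^2"
    unfolding P_def Xp[OF t] by (simp add: ring_distribs Lsimps p_orth[OF t] power2_eq_square)
  show ?thesis using z unfolding e by (simp only: Ladd L_smult l1 l2 l3) (simp add: algebra_simps)
qed

lemma string2:
  assumes t: "t \<in> I"
  shows "of_nat (Suc m) + (a (Suc m) t)^2 * (b (Suc m) t + b m t) = 0"
proof -
  define Pn where "Pn = p (Suc m) t"
  define Pm where "Pm = p m t"
  define c where "c = of_nat (Suc m) * lead_coeff Pn / lead_coeff Pm"
  have z: "L t (pderiv (Pn*Pm) + [:of_real t,0,1:]*(Pn*Pm)) = 0" by (rule L_ibp[OF D])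
  have e: "pderiv (Pn*Pm) + [:of_real t,0,1:]*(Pn*Pm) = Pm * pderiv Pn + Pn * pderiv Pm + smult (of_real t) (Pn*Pm) + ([:0,1:]*Pn)*([:0,1:]*Pm)"
    unfolding quad by (simp add: pderiv_mult algebra_simps)
  have l1: "L t (Pn * pderiv Pm) = 0" unfolding Pn_def Pm_def
    by (rule orth_low[OF t]) (simp add: pderiv_low[OF t])
  have l2: "L t (Pm * pderiv Pn) = c"
  proof -
    define R where "R = pderiv Pn - smult c Pm"
    have "L t (Pm * R) = 0" unfolding Pm_def
    proof (rule orth_low[OF t])
      fix k assume k: "m \<le> k"
      then consider "k = m" | "k > m" by linarith
      thus "coeff R k = 0"
      proof cases
        case 1 thus ?thesis using lc_nz[OF t, of m] coeff_p_top[OF t, of m] coeff_p_top[OF t, of "Suc m"]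
          by (simp add: R_def c_def coeff_pderiv Pn_def Pm_def)
      next
        case 2 thus ?thesis using coeff_p_high[OF t 2] pderiv_low[OF t, of "Suc m" k]
          by (simp add: R_def Pm_def Pn_def)
      qed
    qed
    moreover have "pderiv Pn = R + smult c Pm" by (simp add: R_def)
    moreover have "L t (Pm * Pm) = 1" using p_orth[OF t] by (simp add: Pm_def)
    ultimately show ?thesis by (simp add: distrib_left Lsimps)
  qed
  have l3: "L t (Pn * Pm) = 0" using p_orth[OF t] by (simp add: Pm_def Pn_def)
  have l4: "L t (([:0,1:]*Pn)*([:0,1:]*Pm)) = a (Suc m) t * (b (Suc m) t + b m t)"
    unfolding Pn_def Pm_def Xp[OF t]
    by (cases m) (simp_all add: ring_distribs Lsimps p_orth[OF t])
  have "c + a (Suc m) t * (b (Suc m) t + b m t) = 0"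
    using z unfolding e by (simp only: Ladd L_smult l1 l2 l3 l4) simp
  moreover have "a (Suc m) t * c = of_nat (Suc m)"
    using a_def[OF t, of "Suc m"] lc_nz[OF t, of m] lc_nz[OF t, of "Suc m"] by (simp add: c_def Pn_def Pm_def)
  ultimately have "a (Suc m) t * (c + a (Suc m) t * (b (Suc m) t + b m t)) = 0" by simp
  thus ?thesis using \<open>a (Suc m) t * c = of_nat (Suc m)\<close> by (simp add: algebra_simps power2_eq_square)
qed

definition mp :: "nat \<Rightarrow> real \<Rightarrow> complex poly" where
  "mp n s = smult (inverse (lead_coeff (p n s))) (p n s)"

definition hh :: "nat \<Rightarrow> real \<Rightarrow> complex" where
  "hh n s = L s (mp n s * mp n s)"

lemma p_eq: "s \<in> I \<Longrightarrow> p n s = smult (lead_coeff (p n s)) (mp n s)"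
  using lc_nz[of s n] by (simp add: mp_def)

lemma mp_top: "s \<in> I \<Longrightarrow> coeff (mp n s) n = 1"
  using lc_nz[of s n] coeff_p_top[of s n] by (simp add: mp_def)

lemma mp_high: "s \<in> I \<Longrightarrow> n < k \<Longrightarrow> coeff (mp n s) k = 0"
  using coeff_p_high[of s n k] by (simp add: mp_def)

lemma mp_deg: "s \<in> I \<Longrightarrow> degree (mp n s) = n"
  using p_deg[of s n] lc_nz[of s n] by (simp add: mp_def)

lemma mp_orth_low: "s \<in> I \<Longrightarrow> (\<And>k. k \<ge> N \<Longrightarrow> coeff q k = 0) \<Longrightarrow> L s (mp N s * q) = 0"
  using orth_low[of s N q] by (simp add: mp_def Lsimps)

lemma hh_val: "s \<in> I \<Longrightarrow> hh n s = inverse ((lead_coeff (p n s))^2)"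
  using p_orth[of s n n] by (simp add: hh_def mp_def Lsimps power2_eq_square)

lemma hh_nz: "s \<in> I \<Longrightarrow> hh n s \<noteq> 0"
  using hh_val lc_nz by simp

lemma toolG:
  assumes s: "s \<in> I" and q: "\<And>k. k > N \<Longrightarrow> coeff q k = 0"
  shows "L s (mp N s * q) = coeff q N * hh N s"
proof -
  define R where "R = q - smult (coeff q N) (mp N s)"
  have "L s (mp N s * R) = 0"
  proof (rule mp_orth_low[OF s])
    fix k assume "N \<le> k"
    then consider "k = N" | "k > N" by linarith
    thus "coeff R k = 0" by cases (auto simp: R_def mp_top[OF s] mp_high[OF s] q)
  qed
  moreover have "mp N s * q = mp N s * R + smult (coeff q N) (mp N s * mp N s)" by (simp add: R_def algebra_simps)
  ultimately show ?thesis by (simp add: hh_def Lsimps)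
qed

lemma LXpp: "s \<in> I \<Longrightarrow> L s (([:0,1:] * p n s) * p n s) = b n s"
  unfolding Xp by (cases n) (simp_all add: ring_distribs Lsimps p_orth)

lemma b_formula: "s \<in> I \<Longrightarrow> b n s = L s ([:0,1:] * (mp n s * mp n s)) / hh n s"
proof -
  assume s: "s \<in> I"
  have e: "[:0,1:] * (mp n s * mp n s) = smult (inverse ((lead_coeff (p n s))^2)) (([:0,1:] * p n s) * p n s)"
    by (simp add: mp_def power2_eq_square)
  have "L s ([:0,1:] * (mp n s * mp n s)) = inverse ((lead_coeff (p n s))^2) * L s (([:0,1:] * p n s) * p n s)"
    unfolding e L_smult ..
  thus ?thesis using LXpp[OF s] hh_val[OF s] hh_nz[OF s] lc_nz[OF s] by simp
qed

lemma a2_formula: assumes s: "s \<in> I" shows "(a (Suc m) s)^2 = hh (Suc m) s / hh m s"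
proof -
  have "a (Suc m) s = lead_coeff (p m s) / lead_coeff (p (Suc m) s)" using a_def[OF s, of "Suc m"] by simp
  thus ?thesis using lc_nz[OF s, of m] lc_nz[OF s, of "Suc m"]
    by (simp add: hh_val[OF s] power_divide divide_inverse power_mult_distrib power_inverse mult.commute)
qed

lemma rec_aux:
  fixes Px Py Pm Mx My Mm :: "complex poly"
  assumes r: "smult Ax Px = [:-B,1:] * Py - smult Ay Pm"
    and e: "Px = smult gx Mx" "Py = smult gy My" "Pm = smult gz Mm"
    and c: "Ax * gx = gy" "Ay * gz = gy * C" "gy \<noteq> 0"
  shows "Mx = [:-B,1:] * My - smult C Mm"
proof -
  have "smult gy Mx = smult Ax Px" using e c by simp
  also have "\<dots> = [:-B,1:] * Py - smult Ay Pm" by (rule r)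
  also have "\<dots> = smult gy ([:-B,1:] * My) - smult (gy * C) Mm" using e c(2)
    by (simp only: mult_smult_right smult_smult)
  also have "\<dots> = smult gy ([:-B,1:] * My - smult C Mm)" by (simp add: smult_diff_right)
  finally have "smult gy Mx = smult gy ([:-B,1:] * My - smult C Mm)" .
  hence "smult (inverse gy) (smult gy Mx) = smult (inverse gy) (smult gy ([:-B,1:] * My - smult C Mm))" by simp
  thus ?thesis using c(3) by (simp only: smult_smult) simp
qed

lemma mp_rec:
  assumes s: "s \<in> I"
  shows "mp (Suc n) s = [:- b n s, 1:] * mp n s - (if n = 0 then 0 else smult ((a n s)^2) (mp (n - 1) s))"
proof -
  define g where "g k = lead_coeff (p k s)" for k
  have g: "g k \<noteq> 0" for k using lc_nz[OF s] by (simp add: g_def)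
  have a1: "a (Suc n) s * g (Suc n) = g n" using a_def[OF s, of "Suc n"] g by (simp add: g_def)
  have pe: "p k s = smult (g k) (mp k s)" for k using p_eq[OF s] by (simp add: g_def)
  show ?thesis
  proof (cases "n = 0")
    case True
    have "mp (Suc n) s = [:- b n s, 1:] * mp n s - smult 0 0"
      by (rule rec_aux[where Ay=0 and Pm=0 and gz=1, OF _ pe pe _ a1 _ g]) (use recur[OF s, of n] True in auto)
    thus ?thesis using True by simp
  next
    case False
    have a2: "a n s * g (n - 1) = g n * (a n s)^2"
      using a_def[OF s, of n] False g by (simp add: g_def power2_eq_square field_simps)
    have "mp (Suc n) s = [:- b n s, 1:] * mp n s - smult ((a n s)^2) (mp (n - 1) s)"
      by (rule rec_aux[OF _ pe pe pe a1 a2 g]) (use recur[OF s, of n] False in auto)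
    thus ?thesis using False by simp
  qed
qed

lemma hh_PD:
  assumes t: "t \<in> I" and P: "PD (mp n) P t"
  shows "(hh n has_vector_derivative (L t (P * mp n t + mp n t * P) + L t ([:0,1:] * (mp n t * mp n t)))) (at t)"
proof -
  have "((\<lambda>s. L s (mp n s * mp n s)) has_vector_derivative (L t (P * mp n t + mp n t * P) + L t ([:0,1:] * (mp n t * mp n t)))) (at t)"
  proof (rule L_PD[OF D I_open t PD_mult[OF P P], where N="n+n"])
    fix s assume s: "s \<in> I"
    show "degree (mp n s * mp n s) \<le> n + n" using degree_mult_le[of "mp n s" "mp n s"] mp_deg[OF s, of n] by simp
  qed
  thus ?thesis unfolding hh_def[abs_def] .
qed

lemma LX_PD:
  assumes t: "t \<in> I" and P: "PD (mp n) P t"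
  shows "((\<lambda>s. L s ([:0,1:] * (mp n s * mp n s))) has_vector_derivative
           (L t (0 * (mp n t * mp n t) + [:0,1:] * (P * mp n t + mp n t * P)) + L t ([:0,1:] * ([:0,1:] * (mp n t * mp n t))))) (at t)"
proof (rule L_PD[OF D I_open t PD_mult[OF PD_const PD_mult[OF P P]], where N="Suc (n+n)"])
  fix s assume s: "s \<in> I"
  have "degree ([:0,1:] * (mp n s * mp n s)) \<le> degree ([:0,1:] :: complex poly) + degree (mp n s * mp n s)"
    by (rule degree_mult_le)
  also have "\<dots> \<le> 1 + (n + n)" using degree_mult_le[of "mp n s" "mp n s"] mp_deg[OF s, of n] by simp
  finally show "degree ([:0,1:] * (mp n s * mp n s)) \<le> Suc (n + n)" by simp
qed

lemma b_VD:
  assumes t: "t \<in> I" and P: "PD (mp n) P t"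
  shows "\<exists>B. (b n has_vector_derivative B) (at t)"
proof -
  obtain B where "((\<lambda>s. L s ([:0,1:] * (mp n s * mp n s)) / hh n s) has_vector_derivative B) (at t)"
    using vd_div[OF LX_PD[OF t P] hh_PD[OF t P] hh_nz[OF t]] by blast
  hence "(b n has_vector_derivative B) (at t)"
    by (rule has_vector_derivative_transform_within_open[OF _ I_open t]) (simp add: b_formula)
  thus ?thesis by blast
qed

lemma a2_VD:
  assumes t: "t \<in> I" and P: "PD (mp (Suc m)) P t" and Q: "PD (mp m) Q t"
  shows "\<exists>A. ((\<lambda>s. (a (Suc m) s)^2) has_vector_derivative A) (at t)"
proof -
  obtain A where "((\<lambda>s. hh (Suc m) s / hh m s) has_vector_derivative A) (at t)"
    using vd_div[OF hh_PD[OF t P] hh_PD[OF t Q] hh_nz[OF t]] by blast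
  hence "((\<lambda>s. (a (Suc m) s)^2) has_vector_derivative A) (at t)"
    by (rule has_vector_derivative_transform_within_open[OF _ I_open t]) (simp add: a2_formula)
  thus ?thesis by blast
qed

lemma mp_step:
  assumes t: "t \<in> I" and P: "PD (mp n) P t" and Q: "n = 0 \<or> (\<exists>Q. PD (mp (n - 1)) Q t)"
  shows "\<exists>P'. PD (mp (Suc n)) P' t"
proof -
  obtain B where B: "(b n has_vector_derivative B) (at t)" using b_VD[OF t P] by blast
  have Lin: "PD (\<lambda>s. [:- b n s, 1:]) [:- B, 0:] t"
    by (intro PD_pCons PD_const derivative_intros B)
  show ?thesis
  proof (cases n)
    case 0
    obtain R where "PD (\<lambda>s. [:- b n s, 1:] * mp n s) R t" using PD_mult[OF Lin P] by blast
    hence "PD (mp (Suc n)) R t"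
      by (rule PD_transform[OF I_open t, rotated]) (simp add: mp_rec 0)
    thus ?thesis by blast
  next
    case (Suc m)
    then obtain Q where Q: "PD (mp m) Q t" using Q by auto
    obtain A where A: "((\<lambda>s. (a (Suc m) s)^2) has_vector_derivative A) (at t)"
      using a2_VD[OF t _ Q] P Suc by blast
    obtain R where "PD (\<lambda>s. [:- b n s, 1:] * mp n s - smult ((a (Suc m) s)^2) (mp m s)) R t"
      using PD_diff[OF PD_mult[OF Lin P] PD_smult[OF A Q]] by blast
    hence "PD (mp (Suc n)) R t"
      by (rule PD_transform[OF I_open t, rotated]) (simp add: mp_rec Suc)
    thus ?thesis by blast
  qed
qed

lemma mp0: "s \<in> I \<Longrightarrow> mp 0 s = 1"
  by (rule poly_eqI) (auto simp: mp_top mp_high coeff_1 simp del: One_nat_def)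

lemma mp_PD_pair: "\<forall>t\<in>I. (\<exists>P. PD (mp n) P t) \<and> (\<exists>P. PD (mp (Suc n)) P t)"
proof (induction n)
  case 0
  show ?case
  proof
    fix t assume t: "t \<in> I"
    have P0: "PD (mp 0) 0 t" by (rule PD_transform[OF I_open t _ PD_const[of 1]]) (simp add: mp0)
    thus "(\<exists>P. PD (mp 0) P t) \<and> (\<exists>P. PD (mp (Suc 0)) P t)" using mp_step[OF t P0] by auto
  qed
next
  case (Suc n)
  show ?case
  proof
    fix t assume t: "t \<in> I"
    from Suc t obtain P Q where "PD (mp n) Q t" "PD (mp (Suc n)) P t" by blast
    thus "(\<exists>P. PD (mp (Suc n)) P t) \<and> (\<exists>P. PD (mp (Suc (Suc n))) P t)"
      using mp_step[OF t, of "Suc n" P] by auto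
  qed
qed

lemma mp_PD: "t \<in> I \<Longrightarrow> \<exists>P. PD (mp n) P t"
  using mp_PD_pair by blast

lemma P_high:
  assumes t: "t \<in> I" and P: "PD (mp n) P t" and k: "n \<le> k"
  shows "coeff P k = 0"
proof (cases "k = n")
  case True
  show ?thesis by (rule PD_const_coeff[OF I_open t _ P, of k 1]) (simp add: True mp_top)
next
  case False
  show ?thesis by (rule PD_const_coeff[OF I_open t _ P, of k 0]) (use False k in \<open>simp add: mp_high\<close>)
qed

lemma hh_deriv:
  assumes t: "t \<in> I"
  shows "(hh n has_vector_derivative b n t * hh n t) (at t)"
proof -
  obtain P where P: "PD (mp n) P t" using mp_PD[OF t] by blast
  have z: "L t (mp n t * P) = 0" by (rule mp_orth_low[OF t P_high[OF t P]])
  have "L t (P * mp n t + mp n t * P) = 0" using z by (simp only: mult.commute[of P "mp n t"] Ladd) simp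
  moreover have "L t ([:0,1:] * (mp n t * mp n t)) = b n t * hh n t"
    using b_formula[OF t, of n] hh_nz[OF t, of n] by simp
  ultimately show ?thesis using hh_PD[OF t P] by simp
qed

lemma c_deriv:
  assumes t: "t \<in> I" and P: "PD (mp (Suc j)) P t"
  shows "coeff P j = - ((a (Suc j) t)^2)"
proof -
  obtain Q where Q: "PD (mp j) Q t" using mp_PD[OF t] by blast
  have d: "((\<lambda>s. L s (mp (Suc j) s * mp j s)) has_vector_derivative
           L t (P * mp j t + mp (Suc j) t * Q) + L t ([:0,1:] * (mp (Suc j) t * mp j t))) (at t)"
  proof (rule L_PD[OF D I_open t PD_mult[OF P Q], where N="Suc j + j"])
    fix s assume s: "s \<in> I"
    show "degree (mp (Suc j) s * mp j s) \<le> Suc j + j"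
      using degree_mult_le[of "mp (Suc j) s" "mp j s"] mp_deg[OF s] by simp
  qed
  have "((\<lambda>s. L s (mp (Suc j) s * mp j s)) has_vector_derivative 0) (at t)"
  proof (rule has_vector_derivative_transform_within_open[OF _ I_open t])
    show "((\<lambda>s. 0) has_vector_derivative 0) (at t)" by (rule derivative_intros)
    fix s assume s: "s \<in> I"
    show "0 = L s (mp (Suc j) s * mp j s)" by (rule mp_orth_low[OF s, symmetric]) (simp add: mp_high[OF s])
  qed
  hence sum0: "L t (P * mp j t + mp (Suc j) t * Q) + L t ([:0,1:] * (mp (Suc j) t * mp j t)) = 0"
    using vector_derivative_unique_at[OF d] by blast
  have l1: "L t (mp j t * P) = coeff P j * hh j t"
    by (rule toolG[OF t]) (simp add: P_high[OF t P])
  have l2: "L t (mp (Suc j) t * Q) = 0"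
    by (rule mp_orth_low[OF t]) (simp add: P_high[OF t Q])
  have l3: "L t (mp (Suc j) t * ([:0,1:] * mp j t)) = coeff ([:0,1:] * mp j t) (Suc j) * hh (Suc j) t"
    by (rule toolG[OF t]) (auto simp: coeff_pCons mp_high[OF t] split: nat.split)
  have e1: "L t (P * mp j t + mp (Suc j) t * Q) = coeff P j * hh j t"
    using l1 l2 by (simp only: Ladd mult.commute[of P "mp j t"]) simp
  have e2: "[:0,1:] * (mp (Suc j) t * mp j t) = mp (Suc j) t * ([:0,1:] * mp j t)" by (rule mult.left_commute)
  have e3: "coeff ([:0,1:] * mp j t) (Suc j) = 1" using mp_top[OF t, of j] by simp
  have "coeff P j * hh j t + hh (Suc j) t = 0"
    using sum0 unfolding e1 e2 l3 e3 by simp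
  hence "coeff P j * hh j t = - hh (Suc j) t" by (simp add: eq_neg_iff_add_eq_0)
  hence "coeff P j = - hh (Suc j) t / hh j t" using hh_nz[OF t, of j] by (simp add: field_simps)
  thus ?thesis by (simp add: a2_formula[OF t])
qed

lemma b_coeff:
  assumes s: "s \<in> I"
  shows "b (Suc j) s = coeff (mp (Suc j) s) j - coeff (mp (Suc (Suc j)) s) (Suc j)"
proof -
  have "coeff (mp (Suc (Suc j)) s) (Suc j) = coeff ([:- b (Suc j) s, 1:] * mp (Suc j) s - smult ((a (Suc j) s)^2) (mp j s)) (Suc j)"
    using mp_rec[OF s, of "Suc j"] by simp
  thus ?thesis using mp_top[OF s, of "Suc j"] mp_high[OF s, of j "Suc j"] by simp
qed

lemma a_tendsto:
  assumes t: "t \<in> I"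
  shows "(a (Suc m) \<longlongrightarrow> a (Suc m) t) (at t)"
proof -
  have "continuous_on I (\<lambda>s. lead_coeff (p m s) / lead_coeff (p (Suc m) s))"
    using lc_nz by (intro continuous_on_divide p_cont) auto
  hence "isCont (\<lambda>s. lead_coeff (p m s) / lead_coeff (p (Suc m) s)) t"
    using continuous_on_eq_continuous_at[OF I_open] t by blast
  hence "((\<lambda>s. lead_coeff (p m s) / lead_coeff (p (Suc m) s)) \<longlongrightarrow> a (Suc m) t) (at t)"
    using a_def[OF t, of "Suc m"] by (simp add: isCont_def)
  moreover have "\<forall>\<^sub>F s in at t. lead_coeff (p m s) / lead_coeff (p (Suc m) s) = a (Suc m) s"
    using eventually_at_in_open'[OF I_open t] by eventually_elim (simp add: a_def)
  ultimately show ?thesis by (simp add: tendsto_cong)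
qed

theorem main_loc:
  assumes t: "t \<in> I" and n: "n \<ge> 1"
  shows "(a n t)\<^sup>2 + (a (Suc n) t)\<^sup>2 + (b n t)\<^sup>2 + of_real t = 0
         \<and> of_nat n + (a n t)\<^sup>2 * (b n t + b (n - 1) t) = 0
         \<and> ((\<lambda>s. a n s) has_vector_derivative
               (a n t * (b n t + of_nat n / (2 * (a n t)\<^sup>2)))) (at t)
         \<and> ((\<lambda>s. b n s) has_vector_derivative
               (- (b n t)\<^sup>2 - 2 * (a n t)\<^sup>2 - of_real t)) (at t)"
proof -
  obtain m where nm: "n = Suc m" using n by (cases n) auto
  have s1: "(a n t)\<^sup>2 + (a (Suc n) t)\<^sup>2 + (b n t)\<^sup>2 + of_real t = 0" using string1[OF t, of m] nm by simp
  have s2: "of_nat n + (a n t)\<^sup>2 * (b n t + b (n - 1) t) = 0" using string2[OF t, of m] nm by simp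
  have anz: "a n t \<noteq> 0" using a_nz[OF t n] .
  have d2: "((\<lambda>s. hh n s / hh m s) has_vector_derivative
      ((b n t * hh n t) * hh m t - hh n t * (b m t * hh m t)) / (hh m t)^2) (at t)"
    by (rule vd_div[OF hh_deriv[OF t] hh_deriv[OF t] hh_nz[OF t]])
  have "((\<lambda>s. (a n s)^2) has_vector_derivative
      ((b n t * hh n t) * hh m t - hh n t * (b m t * hh m t)) / (hh m t)^2) (at t)"
    by (rule has_vector_derivative_transform_within_open[OF d2 I_open t]) (simp add: nm a2_formula)
  moreover have "((b n t * hh n t) * hh m t - hh n t * (b m t * hh m t)) / (hh m t)^2 = (b n t - b m t) * (hh n t / hh m t)"
    using hh_nz[OF t, of m] by (simp add: power2_eq_square field_simps)
  moreover have "hh n t / hh m t = (a n t)^2" using a2_formula[OF t, of m] nm by simp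
  ultimately have da2: "((\<lambda>s. (a n s)^2) has_vector_derivative (b n t - b m t) * (a n t)^2) (at t)" by simp
  have ta: "(a n \<longlongrightarrow> a n t) (at t)" using a_tendsto[OF t, of m] nm by simp
  have da: "(a n has_vector_derivative (b n t - b m t) * (a n t)^2 / (2 * a n t)) (at t)"
    by (rule sqrt_deriv[OF _ anz da2]) (use ta in \<open>simp add: isCont_def\<close>)
  have "(b n t - b m t) * (a n t)^2 / (2 * a n t) = a n t * (b n t + of_nat n / (2 * (a n t)\<^sup>2))"
  proof -
    have nn: "of_nat n = - ((a n t)^2 * (b n t + b m t))" using s2 nm by (simp add: eq_neg_iff_add_eq_0)
    show ?thesis unfolding nn using anz by (simp add: field_simps power2_eq_square)
  qed
  with da have DA: "((\<lambda>s. a n s) has_vector_derivative a n t * (b n t + of_nat n / (2 * (a n t)\<^sup>2))) (at t)" by simp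
  obtain P where P: "PD (mp n) P t" using mp_PD[OF t] by blast
  obtain Q where Q: "PD (mp (Suc n)) Q t" using mp_PD[OF t] by blast
  have cP: "coeff P m = - ((a n t)^2)" using c_deriv[OF t, of m P] P nm by simp
  have cQ: "coeff Q n = - ((a (Suc n) t)^2)" using c_deriv[OF t Q] .
  have "((\<lambda>s. coeff (mp n s) m - coeff (mp (Suc n) s) n) has_vector_derivative coeff P m - coeff Q n) (at t)"
    using P Q unfolding PD_def by (intro has_vector_derivative_diff) auto
  hence "(b n has_vector_derivative coeff P m - coeff Q n) (at t)"
    by (rule has_vector_derivative_transform_within_open[OF _ I_open t]) (simp add: nm b_coeff)
  moreover have "coeff P m - coeff Q n = - (b n t)\<^sup>2 - 2 * (a n t)\<^sup>2 - of_real t"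
  proof -
    have "(a (Suc n) t)\<^sup>2 = - (a n t)\<^sup>2 - (b n t)\<^sup>2 - of_real t" using s1 by (simp add: eq_neg_iff_add_eq_0 algebra_simps)
    thus ?thesis unfolding cP cQ by simp
  qed
  ultimately have DB: "((\<lambda>s. b n s) has_vector_derivative - (b n t)\<^sup>2 - 2 * (a n t)\<^sup>2 - of_real t) (at t)" by simp
  show ?thesis using s1 s2 DA DB by blast
qed

end

theorem mainTheorem10:
  fixes r :: nat and lam src tgt :: "nat \<Rightarrow> complex" and I :: "real set"
    and p :: "nat \<Rightarrow> real \<Rightarrow> complex poly" and a b :: "nat \<Rightarrow> real \<Rightarrow> complex"
  assumes dirs_ok: "\<And>j. j < r \<Longrightarrow> src j \<in> dirs \<and> tgt j \<in> dirs \<and> src j \<noteq> tgt j"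
    and I_open: "open I" and I_interval: "is_interval I" and I_ne: "I \<noteq> {}"
    and hankel: "\<And>t n. t \<in> I \<Longrightarrow> hankel_det (\<lambda>k. L_fun r lam src tgt t (monom 1 k)) n \<noteq> 0"
    and p_deg: "\<And>t n. t \<in> I \<Longrightarrow> degree (p n t) = n \<and> p n t \<noteq> 0"
    and p_orth: "\<And>t n m. t \<in> I \<Longrightarrow>
                   L_fun r lam src tgt t (p n t * p m t) = (if n = m then 1 else 0)"
    and p_cont: "\<And>n. continuous_on I (\<lambda>s. lead_coeff (p n s))"
    and a_def: "\<And>t n. t \<in> I \<Longrightarrow> n \<ge> 1 \<Longrightarrow>
                   a n t = lead_coeff (p (n - 1) t) / lead_coeff (p n t)"
    and recur: "\<And>t n. t \<in> I \<Longrightarrow>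
                   smult (a (Suc n) t) (p (Suc n) t)
                     = [:- b n t, 1:] * p n t - (if n = 0 then 0 else smult (a n t) (p (n - 1) t))"
  shows "\<forall>t\<in>I. \<forall>n\<ge>1.
           (a n t)\<^sup>2 + (a (Suc n) t)\<^sup>2 + (b n t)\<^sup>2 + of_real t = 0
         \<and> of_nat n + (a n t)\<^sup>2 * (b n t + b (n - 1) t) = 0
         \<and> ((\<lambda>s. a n s) has_vector_derivative
               (a n t * (b n t + of_nat n / (2 * (a n t)\<^sup>2)))) (at t)
         \<and> ((\<lambda>s. b n s) has_vector_derivative
               (- (b n t)\<^sup>2 - 2 * (a n t)\<^sup>2 - of_real t)) (at t)"
proof -
  interpret OPS r lam src tgt I p a b
  proof (unfold_locales)
    show "\<And>j. j < r \<Longrightarrow> src j \<in> dirs \<and> tgt j \<in> dirs" using dirs_ok by blast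
  qed (use I_open p_deg p_orth p_cont a_def recur in auto)
  show ?thesis using main_loc by blast
qed

end
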